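(* Let $\mathcal F=(A,X,f)$ and $\mathcal G=(B,X,g)$ be fuzzy automata and let $\varphi:\mathcal F\to\mathcal G$ be an epimorphism. Then for each $i\in\{1,2,3\}$, $D_i(\mathcal F)\subseteq D_i(\mathcal G)$, and if $\mathcal F$ is D$i$-directable, then so is $\mathcal G$.
   Context: A fuzzy automaton is a triple $\mathcal F=(A,X,f)$ with $A$ a finite nonempty set of states, $X$ a finite nonempty alphabet, and $f:A\times X\times A\to[0,1]$, extended to words by $f^*(a,\varepsilon,a)=1$, $f^*(a,\varepsilon,b)=0$ ($b\neq a$), $f^*(a,vx,b)=\max_{c\in A}\min\{f^*(a,v,c),f(c,x,b)\}$. Let $\mathcal F(a,w)=\{b\in A\mid f^*(a,w,b)>0\}$. A word $w\in X^*$ is D1-directing for $\mathcal F$ if there is $c\in A$ with $\mathcal F(a,w)=\{c\}$ for all $a\in A$; D2-directing if $\mathcal F(a,w)=\mathcal F(b,w)$ for all $a,b\in A$; D3-directing if there is $c\in A$ with $c\in\mathcal F(a,w)$ for all $a\in A$. $D_i(\mathcal F)$ is the set of D$i$-directing words, and $\mathcal F$ is D$i$-directable if $D_i(\mathcal F)\neq\emptyset$. A mapping $\varphi:A\to B$ is a homomorphism $\mathcal F\to\mathcal G$ if $g(\varphi(a),x,b)=\max\{f(a,x,a')\mid a'\in A,\ \varphi(a')=b\}$ for all $a\in A$, $b\in B$, $x\in X$ (the maximum of the empty set being $0$); an epimorphism is a surjective homomorphism. *)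

theory Defs
  imports Complex_Main
begin

definition fuzzy_automaton :: "'a set \<Rightarrow> 'x set \<Rightarrow> ('a \<Rightarrow> 'x \<Rightarrow> 'a \<Rightarrow> real) \<Rightarrow> bool" where
  "fuzzy_automaton A X f \<longleftrightarrow> finite A \<and> A \<noteq> {} \<and> finite X \<and> X \<noteq> {} \<and>
     (\<forall>a\<in>A. \<forall>x\<in>X. \<forall>b\<in>A. 0 \<le> f a x b \<and> f a x b \<le> 1)"

text \<open>Extension to words, on the reversed word: fstar_rev A f a (rev w) b = f*(a,w,b).
  fstar_rev A f a (x # v) b corresponds to f*(a, rev v @ [x], b).\<close>
fun fstar_rev :: "'a set \<Rightarrow> ('a \<Rightarrow> 'x \<Rightarrow> 'a \<Rightarrow> real) \<Rightarrow> 'a \<Rightarrow> 'x list \<Rightarrow> 'a \<Rightarrow> real" where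
  "fstar_rev A f a [] b = (if a = b then 1 else 0)"
| "fstar_rev A f a (x # v) b = Max ((\<lambda>c. min (fstar_rev A f a v c) (f c x b)) ` A)"

definition fstar :: "'a set \<Rightarrow> ('a \<Rightarrow> 'x \<Rightarrow> 'a \<Rightarrow> real) \<Rightarrow> 'a \<Rightarrow> 'x list \<Rightarrow> 'a \<Rightarrow> real" where
  "fstar A f a w b = fstar_rev A f a (rev w) b"

definition reach :: "'a set \<Rightarrow> ('a \<Rightarrow> 'x \<Rightarrow> 'a \<Rightarrow> real) \<Rightarrow> 'a \<Rightarrow> 'x list \<Rightarrow> 'a set" where
  "reach A f a w = {b \<in> A. fstar A f a w b > 0}"

definition D1 :: "'a set \<Rightarrow> 'x set \<Rightarrow> ('a \<Rightarrow> 'x \<Rightarrow> 'a \<Rightarrow> real) \<Rightarrow> 'x list set" where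
  "D1 A X f = {w \<in> lists X. \<exists>c\<in>A. \<forall>a\<in>A. reach A f a w = {c}}"

definition D2 :: "'a set \<Rightarrow> 'x set \<Rightarrow> ('a \<Rightarrow> 'x \<Rightarrow> 'a \<Rightarrow> real) \<Rightarrow> 'x list set" where
  "D2 A X f = {w \<in> lists X. \<forall>a\<in>A. \<forall>b\<in>A. reach A f a w = reach A f b w}"

definition D3 :: "'a set \<Rightarrow> 'x set \<Rightarrow> ('a \<Rightarrow> 'x \<Rightarrow> 'a \<Rightarrow> real) \<Rightarrow> 'x list set" where
  "D3 A X f = {w \<in> lists X. \<exists>c\<in>A. \<forall>a\<in>A. c \<in> reach A f a w}"

definition Dset :: "nat \<Rightarrow> 'a set \<Rightarrow> 'x set \<Rightarrow> ('a \<Rightarrow> 'x \<Rightarrow> 'a \<Rightarrow> real) \<Rightarrow> 'x list set" where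
  "Dset i A X f = (if i = 1 then D1 A X f else if i = 2 then D2 A X f else D3 A X f)"

definition directable :: "nat \<Rightarrow> 'a set \<Rightarrow> 'x set \<Rightarrow> ('a \<Rightarrow> 'x \<Rightarrow> 'a \<Rightarrow> real) \<Rightarrow> bool" where
  "directable i A X f \<longleftrightarrow> Dset i A X f \<noteq> {}"

text \<open>Homomorphism phi : (A,X,f) -> (B,X,g); max of the empty set is 0.\<close>
definition fuzzy_hom :: "'a set \<Rightarrow> 'b set \<Rightarrow> 'x set \<Rightarrow> ('a \<Rightarrow> 'x \<Rightarrow> 'a \<Rightarrow> real)
    \<Rightarrow> ('b \<Rightarrow> 'x \<Rightarrow> 'b \<Rightarrow> real) \<Rightarrow> ('a \<Rightarrow> 'b) \<Rightarrow> bool" where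
  "fuzzy_hom A B X f g \<phi> \<longleftrightarrow> (\<forall>a\<in>A. \<phi> a \<in> B) \<and>
     (\<forall>a\<in>A. \<forall>b\<in>B. \<forall>x\<in>X. g (\<phi> a) x b =
        (let S = {f a x a' | a'. a' \<in> A \<and> \<phi> a' = b} in if S = {} then 0 else Max S))"

definition fuzzy_epi :: "'a set \<Rightarrow> 'b set \<Rightarrow> 'x set \<Rightarrow> ('a \<Rightarrow> 'x \<Rightarrow> 'a \<Rightarrow> real)
    \<Rightarrow> ('b \<Rightarrow> 'x \<Rightarrow> 'b \<Rightarrow> real) \<Rightarrow> ('a \<Rightarrow> 'b) \<Rightarrow> bool" where
  "fuzzy_epi A B X f g \<phi> \<longleftrightarrow> fuzzy_hom A B X f g \<phi> \<and> \<phi> ` A = B"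

end

theory Submission
  imports Defs
begin

lemma Max_pos_iff:
  assumes "finite S" "S \<noteq> {}"
  shows "(0::real) < Max S \<longleftrightarrow> (\<exists>s\<in>S. 0 < s)"
  using assms by (simp add: Max_gr_iff)

lemma hom_pos:
  assumes "fuzzy_hom A B X f g \<phi>" "finite A" "c \<in> A" "b \<in> B" "x \<in> X"
  shows "0 < g (\<phi> c) x b \<longleftrightarrow> (\<exists>a''\<in>A. \<phi> a'' = b \<and> 0 < f c x a'')"
proof -
  let ?S = "{f c x a' | a'. a' \<in> A \<and> \<phi> a' = b}"
  have eq: "g (\<phi> c) x b = (if ?S = {} then 0 else Max ?S)"
    using assms(1,3,4,5) unfolding fuzzy_hom_def Let_def by blast
  have fin: "finite ?S" using assms(2) by simp
  show ?thesis
  proof (cases "?S = {}")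
    case True then show ?thesis using eq by auto
  next
    case False
    then show ?thesis using eq Max_pos_iff[OF fin False] by auto
  qed
qed

lemma star_pos:
  assumes aut: "fuzzy_automaton A X f" "fuzzy_automaton B X g"
    and epi: "fuzzy_epi A B X f g \<phi>" and a: "a \<in> A"
  shows "v \<in> lists X \<Longrightarrow> b \<in> B \<Longrightarrow>
     (0 < fstar_rev B g (\<phi> a) v b \<longleftrightarrow> (\<exists>a'\<in>A. \<phi> a' = b \<and> 0 < fstar_rev A f a v a'))"
proof (induction v arbitrary: b)
  case Nil
  then show ?case using a by auto
next
  case (Cons x v)
  have hom: "fuzzy_hom A B X f g \<phi>" and surj: "\<phi> ` A = B" using epi by (auto simp: fuzzy_epi_def)
  have finA: "finite A" "A \<noteq> {}" and finB: "finite B" "B \<noteq> {}"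
    using aut by (auto simp: fuzzy_automaton_def)
  have x: "x \<in> X" and vX: "v \<in> lists X" using Cons.prems by auto
  have "0 < fstar_rev B g (\<phi> a) (x # v) b \<longleftrightarrow>
        (\<exists>c\<in>B. 0 < fstar_rev B g (\<phi> a) v c \<and> 0 < g c x b)"
    using finB by (simp add: Max_gr_iff min_less_iff_conj)
  also have "\<dots> \<longleftrightarrow> (\<exists>a'\<in>A. 0 < fstar_rev A f a v a' \<and> 0 < g (\<phi> a') x b)"
    using Cons.IH[OF vX] surj by (metis (no_types, lifting) image_iff)
  also have "\<dots> \<longleftrightarrow> (\<exists>a'\<in>A. 0 < fstar_rev A f a v a' \<and> (\<exists>a''\<in>A. \<phi> a'' = b \<and> 0 < f a' x a''))"
    using hom_pos[OF hom finA(1) _ Cons.prems(2) x] by blast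
  also have "\<dots> \<longleftrightarrow> (\<exists>a''\<in>A. \<phi> a'' = b \<and> (\<exists>a'\<in>A. 0 < fstar_rev A f a v a' \<and> 0 < f a' x a''))"
    by blast
  also have "\<dots> \<longleftrightarrow> (\<exists>a''\<in>A. \<phi> a'' = b \<and> 0 < fstar_rev A f a (x # v) a'')"
    using finA by (simp add: Max_gr_iff min_less_iff_conj)
  finally show ?case .
qed

lemma reach_img:
  assumes aut: "fuzzy_automaton A X f" "fuzzy_automaton B X g"
    and epi: "fuzzy_epi A B X f g \<phi>" and a: "a \<in> A" and w: "w \<in> lists X"
  shows "reach B g (\<phi> a) w = \<phi> ` reach A f a w"
proof -
  have surj: "\<phi> ` A = B" using epi by (auto simp: fuzzy_epi_def)
  have rw: "rev w \<in> lists X" using w by auto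
  note S = star_pos[OF aut epi a rw]
  show ?thesis
  proof
    show "reach B g (\<phi> a) w \<subseteq> \<phi> ` reach A f a w"
    proof
      fix b assume "b \<in> reach B g (\<phi> a) w"
      then have b: "b \<in> B" "0 < fstar_rev B g (\<phi> a) (rev w) b"
        by (auto simp: reach_def fstar_def)
      then obtain a' where "a' \<in> A" "\<phi> a' = b" "0 < fstar_rev A f a (rev w) a'"
        using S by blast
      then show "b \<in> \<phi> ` reach A f a w" by (auto simp: reach_def fstar_def)
    qed
  next
    show "\<phi> ` reach A f a w \<subseteq> reach B g (\<phi> a) w"
    proof
      fix b assume "b \<in> \<phi> ` reach A f a w"
      then obtain a' where a': "a' \<in> A" "\<phi> a' = b" "0 < fstar_rev A f a (rev w) a'"
        by (auto simp: reach_def fstar_def)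
      then have "b \<in> B" using surj by auto
      then show "b \<in> reach B g (\<phi> a) w" using S a' by (auto simp: reach_def fstar_def)
    qed
  qed
qed

theorem proposition6p4:
  fixes A :: "'a set" and B :: "'b set" and X :: "'x set"
    and f :: "'a \<Rightarrow> 'x \<Rightarrow> 'a \<Rightarrow> real" and g :: "'b \<Rightarrow> 'x \<Rightarrow> 'b \<Rightarrow> real"
    and \<phi> :: "'a \<Rightarrow> 'b"
  assumes "fuzzy_automaton A X f" and "fuzzy_automaton B X g"
    and "fuzzy_epi A B X f g \<phi>"
  shows "\<forall>i\<in>{1,2,3::nat}. Dset i A X f \<subseteq> Dset i B X g
           \<and> (directable i A X f \<longrightarrow> directable i B X g)"
proof -
  note R = reach_img[OF assms]
  have surj: "\<phi> ` A = B" using assms(3) by (auto simp: fuzzy_epi_def)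
  have d1: "D1 A X f \<subseteq> D1 B X g"
  proof
    fix w assume "w \<in> D1 A X f"
    then obtain c where w: "w \<in> lists X" and c: "c \<in> A" and h: "\<forall>a\<in>A. reach A f a w = {c}"
      unfolding D1_def by blast
    have "\<forall>b\<in>B. reach B g b w = {\<phi> c}"
    proof
      fix b assume "b \<in> B"
      then obtain a where a: "a \<in> A" "b = \<phi> a" using surj by blast
      then show "reach B g b w = {\<phi> c}" using R[OF a(1) w] h by simp
    qed
    moreover have "\<phi> c \<in> B" using c surj by blast
    ultimately show "w \<in> D1 B X g" using w unfolding D1_def by blast
  qed
  have d2: "D2 A X f \<subseteq> D2 B X g"
  proof
    fix w assume "w \<in> D2 A X f"
    then have w: "w \<in> lists X" and h: "\<forall>a\<in>A. \<forall>b\<in>A. reach A f a w = reach A f b w"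
      unfolding D2_def by blast+
    have "\<forall>b1\<in>B. \<forall>b2\<in>B. reach B g b1 w = reach B g b2 w"
    proof (intro ballI)
      fix b1 b2 assume "b1 \<in> B" "b2 \<in> B"
      then obtain a1 a2 where a: "a1 \<in> A" "b1 = \<phi> a1" "a2 \<in> A" "b2 = \<phi> a2" using surj by blast
      then show "reach B g b1 w = reach B g b2 w" 
      proof -
        have "reach A f a1 w = reach A f a2 w" using h a(1,3) by blast
        then show ?thesis using R[OF a(1) w] R[OF a(3) w] a(2,4) by simp
      qed
    qed
    then show "w \<in> D2 B X g" using w unfolding D2_def by blast
  qed
  have d3: "D3 A X f \<subseteq> D3 B X g"
  proof
    fix w assume "w \<in> D3 A X f"
    then obtain c where w: "w \<in> lists X" and c: "c \<in> A" and h: "\<forall>a\<in>A. c \<in> reach A f a w"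
      unfolding D3_def by blast
    have "\<forall>b\<in>B. \<phi> c \<in> reach B g b w"
    proof
      fix b assume "b \<in> B"
      then obtain a where a: "a \<in> A" "b = \<phi> a" using surj by blast
      then show "\<phi> c \<in> reach B g b w" using R[OF a(1) w] h by simp
    qed
    moreover have "\<phi> c \<in> B" using c surj by blast
    ultimately show "w \<in> D3 B X g" using w unfolding D3_def by blast
  qed
  have "\<forall>i\<in>{1,2,3::nat}. Dset i A X f \<subseteq> Dset i B X g"
    using d1 d2 d3 unfolding Dset_def by simp
  then show ?thesis unfolding directable_def by blast
qed

end
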